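(* Let $H_1$ be a fixed graph with minimum degree $\delta$. Then $f(H_1,\overline{K_n})=n+2\sqrt{\delta n}+O(1)$ as $n\to\infty$.
   Context: All graphs are finite and simple. $\overline{K_n}$ is the edgeless graph on $n$ vertices. A graph $G$ is $(H_1,H_2)$-full if every vertex of $G$ belongs to an induced subgraph isomorphic to $H_1$ and to an induced subgraph isomorphic to $H_2$; $f(H_1,H_2)$ is the minimum order of an $(H_1,H_2)$-full graph. *)

theory Defs
  imports Complex_Main
begin

definition graph :: "'a set \<Rightarrow> ('a \<Rightarrow> 'a \<Rightarrow> bool) \<Rightarrow> bool" where
  "graph V E \<longleftrightarrow> finite V \<and> (\<forall>x y. E x y \<longrightarrow> x \<in> V \<and> y \<in> V \<and> x \<noteq> y)
     \<and> (\<forall>x y. E x y \<longrightarrow> E y x)"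

definition degree :: "'a set \<Rightarrow> ('a \<Rightarrow> 'a \<Rightarrow> bool) \<Rightarrow> 'a \<Rightarrow> nat" where
  "degree V E v = card {u \<in> V. E v u}"

definition min_degree :: "'a set \<Rightarrow> ('a \<Rightarrow> 'a \<Rightarrow> bool) \<Rightarrow> nat" where
  "min_degree V E = Min (degree V E ` V)"

definition in_induced_copy ::
  "'a set \<Rightarrow> ('a \<Rightarrow> 'a \<Rightarrow> bool) \<Rightarrow> 'a \<Rightarrow> 'b set \<Rightarrow> ('b \<Rightarrow> 'b \<Rightarrow> bool) \<Rightarrow> bool" where
  "in_induced_copy V E v W F \<longleftrightarrow>
     (\<exists>S \<phi>. S \<subseteq> V \<and> v \<in> S \<and> bij_betw \<phi> W S \<and>
        (\<forall>x\<in>W. \<forall>y\<in>W. F x y \<longleftrightarrow> E (\<phi> x) (\<phi> y)))"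

definition full ::
  "'a set \<Rightarrow> ('a \<Rightarrow> 'a \<Rightarrow> bool) \<Rightarrow> 'b set \<Rightarrow> ('b \<Rightarrow> 'b \<Rightarrow> bool)
     \<Rightarrow> 'c set \<Rightarrow> ('c \<Rightarrow> 'c \<Rightarrow> bool) \<Rightarrow> bool" where
  "full V E W1 F1 W2 F2 \<longleftrightarrow>
     (\<forall>v\<in>V. in_induced_copy V E v W1 F1 \<and> in_induced_copy V E v W2 F2)"

text \<open>Minimum order of a (nonempty) (H1,H2)-full graph; w.l.o.g. on vertex set {0..<m}.\<close>
definition f_full ::
  "'b set \<Rightarrow> ('b \<Rightarrow> 'b \<Rightarrow> bool) \<Rightarrow> 'c set \<Rightarrow> ('c \<Rightarrow> 'c \<Rightarrow> bool) \<Rightarrow> nat" where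
  "f_full W1 F1 W2 F2 = (LEAST m. m \<ge> 1 \<and>
      (\<exists>E. graph {0..<m} E \<and> full {0..<m} E W1 F1 W2 F2))"

definition edgeless :: "nat \<Rightarrow> nat set \<times> (nat \<Rightarrow> nat \<Rightarrow> bool)" where
  "edgeless n = ({0..<n}, \<lambda>_ _. False)"

end

theory Submission
  imports Defs
begin


lemma indep_copy:
  assumes "finite T" "T \<subseteq> V" "v \<in> T" "n \<le> card T" "1 \<le> n"
    "\<forall>x\<in>T. \<forall>y\<in>T. \<not> E x y"
  shows "in_induced_copy V E v (fst (edgeless n)) (snd (edgeless n))"
proof -
  have "n - 1 \<le> card (T - {v})" using assms by (simp add: card_Diff_singleton)
  then obtain S0 where S0: "S0 \<subseteq> T - {v}" "card S0 = n - 1" "finite S0"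
    by (rule obtain_subset_with_card_n)
  define S where "S = insert v S0"
  have "v \<notin> S0" using S0 by auto
  then have cS: "card S = n" using S0 assms(5) unfolding S_def by simp
  have fS: "finite S" using S0 S_def by auto
  obtain h where h: "bij_betw h {0..<card S} S" using ex_bij_betw_nat_finite[OF fS] by blast
  have SV: "S \<subseteq> V" "v \<in> S" using S0 assms unfolding S_def by auto
  have ST: "S \<subseteq> T" using S0 assms(3) unfolding S_def by auto
  have "\<forall>x\<in>{0..<n}. \<forall>y\<in>{0..<n}. \<not> E (h x) (h y)"
  proof (intro ballI)
    fix x y assume "x \<in> {0..<n}" "y \<in> {0..<n}"
    then have "h x \<in> T" "h y \<in> T" using h cS ST unfolding bij_betw_def by auto
    then show "\<not> E (h x) (h y)" using assms(6) by blast
  qed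
  then show ?thesis unfolding in_induced_copy_def edgeless_def
    using h cS SV by (intro exI[of _ S] exI[of _ h]) auto
qed

lemma get_indep:
  assumes "in_induced_copy V E v (fst (edgeless n)) (snd (edgeless n))"
  shows "\<exists>S\<subseteq>V. v \<in> S \<and> card S = n \<and> (\<forall>a\<in>S. \<forall>b\<in>S. \<not> E a b)"
proof -
  obtain S h where S: "S \<subseteq> V" "v \<in> S" "bij_betw h {0..<n} S"
    "\<forall>x\<in>{0..<n}. \<forall>y\<in>{0..<n}. \<not> E (h x) (h y)"
    using assms unfolding in_induced_copy_def edgeless_def by auto
  have "card S = n" using bij_betw_same_card[OF S(3)] by simp
  moreover have "\<forall>a\<in>S. \<forall>b\<in>S. \<not> E a b"
    using S(3,4) unfolding bij_betw_def by auto
  ultimately show ?thesis using S by blast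
qed

lemma copy_deg:
  assumes "in_induced_copy V E v W F" "finite V" "finite W" "W \<noteq> {}"
  shows "min_degree W F \<le> card {u\<in>V. E v u}"
proof -
  obtain S \<phi> where S: "S \<subseteq> V" "v \<in> S" "bij_betw \<phi> W S"
    "\<forall>x\<in>W. \<forall>y\<in>W. F x y \<longleftrightarrow> E (\<phi> x) (\<phi> y)"
    using assms unfolding in_induced_copy_def by auto
  obtain w where w: "w \<in> W" "\<phi> w = v" using S(2,3) unfolding bij_betw_def by auto
  have "{y\<in>W. F w y} \<subseteq> W" by auto
  then have inj: "inj_on \<phi> {y\<in>W. F w y}" using S(3) unfolding bij_betw_def
    using inj_on_subset by blast
  have sub: "\<phi> ` {y\<in>W. F w y} \<subseteq> {u\<in>V. E v u}" using S w unfolding bij_betw_def by auto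
  have "degree W F w = card (\<phi> ` {y\<in>W. F w y})"
    unfolding degree_def using card_image[OF inj] by simp
  also have "\<dots> \<le> card {u\<in>V. E v u}" using sub assms(2) by (intro card_mono) auto
  finally have "degree W F w \<le> card {u\<in>V. E v u}" .
  moreover have "min_degree W F \<le> degree W F w" unfolding min_degree_def
    using assms w by (intro Min_le) auto
  ultimately show ?thesis by linarith
qed

lemma double_count:
  assumes "finite P" "finite Q"
  shows "(\<Sum>x\<in>P. card {y\<in>Q. R x y}) = (\<Sum>y\<in>Q. card {x\<in>P. R x y})"
proof -
  have a: "card {y\<in>Q. R x y} = (\<Sum>y\<in>Q. if R x y then 1 else 0)" for x
    using sum.inter_filter[OF assms(2), of "\<lambda>_. (1::nat)" "R x"] by simp
  have b: "card {x\<in>P. R x y} = (\<Sum>x\<in>P. if R x y then 1 else 0)" for y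
    using sum.inter_filter[OF assms(1), of "\<lambda>_. (1::nat)" "\<lambda>x. R x y"] by simp
  show ?thesis unfolding a b by (rule sum.swap)
qed

lemma iso_copy:
  assumes "bij_betw g V V'" "\<forall>x\<in>V. \<forall>y\<in>V. E x y \<longleftrightarrow> E' (g x) (g y)"
    "in_induced_copy V E v W F"
  shows "in_induced_copy V' E' (g v) W F"
proof -
  obtain S \<phi> where S: "S \<subseteq> V" "v \<in> S" "bij_betw \<phi> W S"
    "\<forall>x\<in>W. \<forall>y\<in>W. F x y \<longleftrightarrow> E (\<phi> x) (\<phi> y)"
    using assms unfolding in_induced_copy_def by auto
  have "bij_betw g S (g ` S)" using assms(1) S(1) bij_betw_subset by blast
  then have b: "bij_betw (g \<circ> \<phi>) W (g ` S)" using S(3) bij_betw_trans by blast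
  have "\<forall>x\<in>W. \<forall>y\<in>W. F x y \<longleftrightarrow> E' ((g \<circ> \<phi>) x) ((g \<circ> \<phi>) y)"
  proof (intro ballI)
    fix x y assume xy: "x \<in> W" "y \<in> W"
    then have "\<phi> x \<in> V" "\<phi> y \<in> V" using S(1,3) unfolding bij_betw_def by auto
    then show "F x y \<longleftrightarrow> E' ((g \<circ> \<phi>) x) ((g \<circ> \<phi>) y)"
      using S(4) xy assms(2) by simp
  qed
  moreover have "g ` S \<subseteq> V'" using S(1) assms(1) unfolding bij_betw_def by auto
  ultimately show ?thesis unfolding in_induced_copy_def using b S(2)
    by (intro exI[of _ "g ` S"] exI[of _ "g \<circ> \<phi>"]) auto
qed

lemma transfer:
  fixes V :: "'v set"
  assumes "graph V E" "full V E W1 F1 W2 F2"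
  shows "\<exists>E'. graph {0..<card V} E' \<and> full {0..<card V} E' W1 F1 W2 F2"
proof -
  have fV: "finite V" using assms unfolding graph_def by auto
  obtain h where h: "bij_betw h {0..<card V} V" using ex_bij_betw_nat_finite[OF fV] by blast
  define g where "g = inv_into {0..<card V} h"
  have g: "bij_betw g V {0..<card V}" unfolding g_def by (rule bij_betw_inv_into[OF h])
  have hg: "h (g x) = x" if "x \<in> V" for x
    unfolding g_def using h that by (simp add: bij_betw_inv_into_right)
  define E' where "E' = (\<lambda>i j. i < card V \<and> j < card V \<and> E (h i) (h j))"
  have iso: "\<forall>x\<in>V. \<forall>y\<in>V. E x y \<longleftrightarrow> E' (g x) (g y)"
    using g hg unfolding E'_def bij_betw_def by auto
  have gr: "graph {0..<card V} E'"
    using assms(1) h unfolding graph_def E'_def bij_betw_def inj_on_def by auto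
  have "full {0..<card V} E' W1 F1 W2 F2"
    unfolding full_def
  proof
    fix i assume i: "i \<in> {0..<card V}"
    then have hi: "h i \<in> V" "g (h i) = i" using h unfolding g_def bij_betw_def
      by (auto simp: inv_into_f_f)
    then show "in_induced_copy {0..<card V} E' i W1 F1 \<and> in_induced_copy {0..<card V} E' i W2 F2"
      using assms(2) iso_copy[OF g iso] unfolding full_def by metis
  qed
  then show ?thesis using gr by blast
qed



lemma amgm:
  fixes b X :: real assumes "0 \<le> X"
  shows "2 * b * sqrt X \<le> b^2 + X"
proof -
  have "0 \<le> (b - sqrt X)^2" by simp
  also have "\<dots> = b^2 - 2 * b * sqrt X + X" using assms by (simp add: power2_diff)
  finally show ?thesis by simp
qed

lemma lower:
  fixes V :: "'v set"
  assumes gV: "graph V E" and fu: "full V E W F (fst (edgeless n)) (snd (edgeless n))"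
    and "V \<noteq> {}" "1 \<le> n" "graph W F" "W \<noteq> {}"
  shows "real n + 2 * sqrt (real (min_degree W F) * real n) - real (min_degree W F) \<le> real (card V)"
proof -
  define \<delta> where "\<delta> = min_degree W F"
  have fV: "finite V" and Esym: "\<And>x y. E x y \<Longrightarrow> E y x"
    and Ein: "\<And>x y. E x y \<Longrightarrow> x \<in> V \<and> y \<in> V \<and> x \<noteq> y"
    using gV unfolding graph_def by auto
  have fW: "finite W" using assms unfolding graph_def by auto
  have deg: "\<delta> \<le> card {u\<in>V. E v u}" if "v \<in> V" for v
  proof -
    have "in_induced_copy V E v W F" using fu that unfolding full_def by blast
    then show ?thesis using copy_deg[of V E v W F] fV fW assms(6) unfolding \<delta>_def by blast
  qed
  have indep: "\<exists>S\<subseteq>V. v \<in> S \<and> card S = n \<and> (\<forall>a\<in>S. \<forall>b\<in>S. \<not> E a b)" if "v \<in> V" for v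
  proof -
    have "in_induced_copy V E v (fst (edgeless n)) (snd (edgeless n))" using fu that unfolding full_def by blast
    then show ?thesis by (rule get_indep)
  qed
  obtain v0 where "v0 \<in> V" using assms by auto
  then obtain I where I: "I \<subseteq> V" "card I = n" "\<forall>a\<in>I. \<forall>b\<in>I. \<not> E a b"
    using indep by blast
  have fI: "finite I" using I fV finite_subset by blast
  have nV: "n \<le> card V" using I fV card_mono by metis
  show ?thesis
  proof (cases "\<delta> = 0")
    case True
    then show ?thesis using nV unfolding \<delta>_def[symmetric] by simp
  next
    case False
    define R where "R = V - I"
    have fR: "finite R" using fV R_def by auto
    obtain x0 where x0: "x0 \<in> I" using I assms(4) by fastforce
    then have "0 < card {u\<in>V. E x0 u}" using deg[of x0] False I by auto
    then obtain u0 where "u0 \<in> V" "E x0 u0" by (metis (no_types, lifting) card.empty empty_Collect_eq less_irrefl)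
    then have "u0 \<in> R" using I x0 unfolding R_def by auto
    then have Rne: "R \<noteq> {}" by auto
    define d where "d = (\<lambda>y. card {x\<in>I. E y x})"
    obtain r where r: "r \<in> R" "d r = Max (d ` R)"
    proof -
      have "Max (d ` R) \<in> d ` R" using fR Rne by (intro Max_in) auto
      then show ?thesis using that by (metis imageE)
    qed
    have dmax: "d y \<le> d r" if "y \<in> R" for y using r that fR by simp
    obtain J where J: "J \<subseteq> V" "r \<in> J" "card J = n" "\<forall>a\<in>J. \<forall>b\<in>J. \<not> E a b"
      using indep[of r] r R_def by auto
    have fJ: "finite J" using J fV finite_subset by blast
    define B where "B = J - I"
    define b where "b = card B"
    have cJ: "card (J \<inter> I) + b = n"
    proof -
      have "J = (J \<inter> I) \<union> B" "(J \<inter> I) \<inter> B = {}" unfolding B_def by auto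
      then show ?thesis using card_Un_disjoint[of "J \<inter> I" B] fJ J(3) unfolding b_def
        by (metis finite_Int finite_Un)
    qed
    have "J \<inter> I \<subseteq> I - {x\<in>I. E r x}" using J by auto
    then have "card (J \<inter> I) \<le> card (I - {x\<in>I. E r x})" using fI by (intro card_mono) auto
    also have "\<dots> = n - d r" unfolding d_def using I fI
      by (subst card_Diff_subset) auto
    finally have "card (J \<inter> I) \<le> n - d r" .
    moreover have "d r \<le> n" unfolding d_def using I fI by (metis (no_types, lifting) card_mono mem_Collect_eq subsetI)
    ultimately have Db: "d r \<le> b" using cJ by linarith
    define P where "P = J \<inter> I"
    define Q where "Q = V - (I \<union> J)"
    have fP: "finite P" "finite Q" using fI fV unfolding P_def Q_def by auto
    have cIJ: "card (I \<union> J) = n + b"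
    proof -
      have "I \<union> J = I \<union> B" "I \<inter> B = {}" unfolding B_def by auto
      then show ?thesis using card_Un_disjoint[of I B] fI fJ I(2) unfolding b_def B_def by auto
    qed
    have cQ: "card Q = card V - (n + b)" unfolding Q_def using cIJ I J fV
      by (subst card_Diff_subset) (auto intro: finite_subset)
    have nbV: "n + b \<le> card V" using cIJ I J fV by (metis card_mono le_sup_iff)
    have "(\<Sum>x\<in>P. \<delta>) \<le> (\<Sum>x\<in>P. card {y\<in>V. E x y})"
      using deg I unfolding P_def by (intro sum_mono) auto
    also have "\<dots> = (\<Sum>x\<in>P. card {y\<in>Q. E x y})"
    proof (rule sum.cong)
      fix x assume x: "x \<in> P"
      have "{y\<in>V. E x y} = {y\<in>Q. E x y}" using x I J unfolding P_def Q_def by auto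
      then show "card {y\<in>V. E x y} = card {y\<in>Q. E x y}" by simp
    qed simp
    also have "\<dots> = (\<Sum>y\<in>Q. card {x\<in>P. E x y})" using double_count fP by blast
    also have "\<dots> \<le> (\<Sum>y\<in>Q. d r)"
    proof (rule sum_mono)
      fix y assume y: "y \<in> Q"
      have "card {x\<in>P. E x y} \<le> d y" unfolding d_def using fI Esym unfolding P_def
        by (intro card_mono) auto
      also have "\<dots> \<le> d r" using y dmax unfolding Q_def R_def by auto
      finally show "card {x\<in>P. E x y} \<le> d r" .
    qed
    finally have key0: "card P * \<delta> \<le> card Q * d r" by simp
    have "card P = n - b" using cJ unfolding P_def by simp
    then have key: "(n - b) * \<delta> \<le> (card V - (n + b)) * b" using key0 cQ Db
      by (metis mult_le_mono2 order_trans)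
    have bn: "b \<le> n" using cJ by simp
    have keyr: "(real n - real b) * real \<delta> \<le> (real (card V) - real n - real b) * real b"
    proof -
      have "real ((n - b) * \<delta>) \<le> real ((card V - (n + b)) * b)" using key by (simp only: of_nat_le_iff)
      moreover have "real (n - b) = real n - real b" using bn by (simp add: of_nat_diff)
      moreover have "real (card V - (n + b)) = real (card V) - real n - real b" using nbV by (simp add: of_nat_diff)
      ultimately show ?thesis by (simp only: of_nat_mult)
    qed
    have bpos: "b > 0"
    proof (rule ccontr)
      assume "\<not> b > 0" then have "b = 0" by simp
      then have "n * \<delta> = 0" using key by simp
      then show False using False assms(4) by simp
    qed
    have "2 * real b * sqrt (real \<delta> * real n) \<le> (real b)^2 + real \<delta> * real n"
      by (rule amgm) simp
    also have "\<dots> \<le> real b * (real (card V) - real n + real \<delta>)"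
      using keyr by (simp add: algebra_simps power2_eq_square)
    finally have "real b * (2 * sqrt (real \<delta> * real n)) \<le> real b * (real (card V) - real n + real \<delta>)"
      by (simp add: algebra_simps)
    then have "2 * sqrt (real \<delta> * real n) \<le> real (card V) - real n + real \<delta>"
      using bpos by (simp add: mult_le_cancel_left_pos)
    then show ?thesis unfolding \<delta>_def by simp
  qed
qed



lemma numeric:
  fixes n d :: nat
  assumes n1: "1 \<le> n"
  defines "c \<equiv> max 1 (nat \<lceil>sqrt (real d * real n)\<rceil>)"
  shows "real (((n - 1) div c + 1) * d) + real c \<le> 2 * sqrt (real d * real n) + real d + 1"
proof -
  define s where "s = sqrt (real d * real n)"
  have s0: "0 \<le> s" unfolding s_def by simp
  have c1: "1 \<le> c" unfolding c_def by simp
  have cs: "real c \<le> s + 1"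
  proof (cases "nat \<lceil>s\<rceil> \<le> 1")
    case True then have "c = 1" unfolding c_def s_def by simp
    then show ?thesis using s0 by simp
  next
    case False then have "c = nat \<lceil>s\<rceil>" unfolding c_def s_def by simp
    then show ?thesis using s0 by (simp add: of_nat_nat)
  qed
  have sc: "s \<le> real c" unfolding c_def s_def
    by (metis (no_types, lifting) le_nat_iff max.cobounded2 of_nat_le_iff real_nat_ceiling_ge order_trans)
  have q: "real ((n - 1) div c) * real c \<le> real n"
  proof -
    have "(n - 1) div c * c \<le> n" by (meson diff_le_self div_times_less_eq_dividend le_trans)
    then show ?thesis by (metis of_nat_le_iff of_nat_mult)
  qed
  have pd: "real ((n - 1) div c) * real d \<le> s"
  proof (cases "d = 0")
    case True then show ?thesis using s0 by simp
  next
    case False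
    then have spos: "0 < s" unfolding s_def using n1 by simp
    have ss: "s * s = real d * real n" unfolding s_def by simp
    have "real ((n - 1) div c) * real d * s \<le> real ((n - 1) div c) * real d * real c"
      using sc by (intro mult_left_mono) auto
    also have "\<dots> = (real ((n - 1) div c) * real c) * real d" by simp
    also have "\<dots> \<le> real n * real d" using q by (intro mult_right_mono) auto
    also have "\<dots> = s * s" using ss by simp
    finally have "real ((n - 1) div c) * real d * s \<le> s * s" .
    then show ?thesis using spos by (metis mult_le_cancel_right_pos)
  qed
  have "real (((n - 1) div c + 1) * d) = real ((n - 1) div c) * real d + real d" by (simp add: algebra_simps)
  then show ?thesis using pd cs unfolding s_def by linarith
qed



datatype 'a vtx = VI nat | VA nat 'a | VQ 'a | VB nat

fun adj0 :: "('a \<Rightarrow> 'a \<Rightarrow> bool) \<Rightarrow> nat \<Rightarrow> 'a vtx \<Rightarrow> 'a vtx \<Rightarrow> bool" where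
  "adj0 F c (VI i) (VA j w) = (j = i div c + 1)"
| "adj0 F c (VB b) (VA j w) = (j = 0)"
| "adj0 F c (VA j w) (VA j' w') = (j = j' \<and> F w w')"
| "adj0 F c (VA j w) (VQ q) = F w q"
| "adj0 F c (VQ q) (VQ q') = F q q'"
| "adj0 F c _ _ = False"

lemma upper_graph:
  assumes gW: "graph W F" and w0: "w0 \<in> W" and n1: "1 \<le> n" and c1: "1 \<le> c"
  defines "N0 \<equiv> {w\<in>W. F w0 w}"
    and "Q0 \<equiv> W - insert w0 {w\<in>W. F w0 w}"
    and "p \<equiv> (n - 1) div c + 1"
  defines "V \<equiv> VI ` {..<n} \<union> (\<lambda>(j,w). VA j w) ` ({..p} \<times> N0) \<union> VQ ` Q0 \<union> VB ` {..<c}"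
  defines "E \<equiv> \<lambda>u v. u \<in> V \<and> v \<in> V \<and> (adj0 F c u v \<or> adj0 F c v u)"
  shows "graph V E \<and> full V E W F (fst (edgeless n)) (snd (edgeless n))
     \<and> card V \<le> n + (p + 1) * card N0 + card W + c"
proof -
  have fW: "finite W" and Fsym: "\<And>x y. F x y \<Longrightarrow> F y x"
    and Fin: "\<And>x y. F x y \<Longrightarrow> x \<in> W \<and> y \<in> W \<and> x \<noteq> y"
    using gW unfolding graph_def by auto
  have memVI: "VI i \<in> V \<longleftrightarrow> i < n" for i unfolding V_def by auto
  have memVA: "VA j w \<in> V \<longleftrightarrow> j \<le> p \<and> w \<in> N0" for j w unfolding V_def by auto
  have memVQ: "VQ q \<in> V \<longleftrightarrow> q \<in> Q0" for q unfolding V_def by auto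
  have memVB: "VB b \<in> V \<longleftrightarrow> b < c" for b unfolding V_def by auto
  note mem = memVI memVA memVQ memVB
  have fN0: "finite N0" "finite Q0" using fW unfolding N0_def Q0_def by auto
  have fV: "finite V" unfolding V_def using fN0 by auto
  have g2: "\<forall>x y. E x y \<longrightarrow> x \<in> V \<and> y \<in> V \<and> x \<noteq> y"
  proof (intro allI impI)
    fix x y assume "E x y"
    then show "x \<in> V \<and> y \<in> V \<and> x \<noteq> y" unfolding E_def
      by (cases x; cases y) (auto dest: Fin)
  qed
  have g3: "\<forall>x y. E x y \<longrightarrow> E y x" unfolding E_def by auto
  have gr: "graph V E" unfolding graph_def using fV g2 g3 by blast
  define \<phi> where "\<phi> = (\<lambda>z j w. if w = w0 then z else if F w0 w then VA j w else VQ w)"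
  have copy: "in_induced_copy V E v W F"
    if z: "z \<in> V" "j \<le> p" "z = VI i \<or> z = VB i" "\<forall>w\<in>N0. adj0 F c z (VA j w)"
      and v: "v \<in> \<phi> z j ` W" for z j i v
  proof -
    have inj: "inj_on (\<phi> z j) W" unfolding inj_on_def \<phi>_def using z(3) by auto
    have sub: "\<phi> z j ` W \<subseteq> V" using z unfolding \<phi>_def by (auto simp: mem N0_def Q0_def)
    have adj: "F x y \<longleftrightarrow> E (\<phi> z j x) (\<phi> z j y)" if xy: "x \<in> W" "y \<in> W" for x y
    proof -
      have inV: "\<phi> z j x \<in> V" "\<phi> z j y \<in> V" using sub xy by auto
      have "F x y \<longleftrightarrow> adj0 F c (\<phi> z j x) (\<phi> z j y) \<or> adj0 F c (\<phi> z j y) (\<phi> z j x)"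
        using z(3,4) xy unfolding \<phi>_def N0_def by (auto dest: Fin Fsym)
      then show ?thesis using inV unfolding E_def by simp
    qed
    show ?thesis unfolding in_induced_copy_def
      using inj sub adj v by (intro exI[of _ "\<phi> z j ` W"] exI[of _ "\<phi> z j"]) (auto simp: bij_betw_def)
  qed
  have VB0: "VB 0 \<in> V" using c1 by (simp add: mem)
  have Hcop: "in_induced_copy V E v W F" if v: "v \<in> V" for v
  proof (cases v)
    case (VI i)
    then have i: "i < n" using v mem by simp
    have jp: "i div c + 1 \<le> p" unfolding p_def using i n1 by (simp add: div_le_mono)
    have "v = \<phi> (VI i) (i div c + 1) w0" unfolding \<phi>_def using VI by simp
    then have "v \<in> \<phi> (VI i) (i div c + 1) ` W" using w0 by blast
    then show ?thesis using copy[of "VI i" "i div c + 1" i v] v VI jp by (auto simp: N0_def)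
  next
    case (VB b)
    have "v = \<phi> (VB b) 0 w0" unfolding \<phi>_def using VB by simp
    then have "v \<in> \<phi> (VB b) 0 ` W" using w0 by blast
    then show ?thesis using copy[of "VB b" 0 b v] v VB by auto
  next
    case (VQ q)
    then have q: "q \<in> W" "q \<noteq> w0" "\<not> F w0 q" using v by (auto simp: mem Q0_def)
    have "v = \<phi> (VB 0) 0 q" unfolding \<phi>_def using VQ q by simp
    then have "v \<in> \<phi> (VB 0) 0 ` W" using q by blast
    then show ?thesis using copy[of "VB 0" 0 0 v] VB0 by auto
  next
    case (VA j w)
    then have jw: "j \<le> p" "w \<in> W" "F w0 w" "w \<noteq> w0" using v Fin by (auto simp: mem N0_def)
    show ?thesis
    proof (cases "j = 0")
      case True
      have "v = \<phi> (VB 0) 0 w" unfolding \<phi>_def using VA jw True by simp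
      then have "v \<in> \<phi> (VB 0) 0 ` W" using jw by blast
      then show ?thesis using copy[of "VB 0" 0 0 v] VB0 by auto
    next
      case False
      define i where "i = (j - 1) * c"
      have "j - 1 \<le> (n - 1) div c" using jw(1) unfolding p_def by simp
      then have "(j - 1) * c \<le> ((n - 1) div c) * c" by simp
      also have "\<dots> \<le> n - 1" by simp
      finally have i: "i < n" unfolding i_def using n1 by simp
      have idiv: "i div c + 1 = j" unfolding i_def using c1 False by simp
      have "VI i \<in> V" using i by (simp add: mem)
      moreover have "v = \<phi> (VI i) j w" unfolding \<phi>_def using VA jw by simp
      then have "v \<in> \<phi> (VI i) j ` W" using jw by blast
      ultimately show ?thesis using copy[of "VI i" j i v] jw idiv by auto
    qed
  qed
  have noE: "\<not> E x y" if "x \<in> VI ` UNIV \<union> VB ` UNIV" "y \<in> VI ` UNIV \<union> VB ` UNIV" for x y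
    using that unfolding E_def by auto
  have Icop: "in_induced_copy V E v (fst (edgeless n)) (snd (edgeless n))" if v: "v \<in> V" for v
  proof (cases v)
    case (VI i)
    let ?T = "(VI ` {..<n}) :: 'a vtx set"
    have "card ?T = n" by (simp add: card_image inj_on_def)
    then have cT: "n \<le> card ?T" by linarith
    show ?thesis using v VI noE cT by (intro indep_copy[of ?T]) (use n1 in \<open>auto simp: mem\<close>)
  next
    case (VB b)
    let ?T = "(VI ` {..<n} \<union> VB ` {..<c}) :: 'a vtx set"
    have "card ((VI ` {..<n}) :: 'a vtx set) = n" by (simp add: card_image inj_on_def)
    then have "n \<le> card ?T" by (metis card_mono finite_Un finite_imageI finite_lessThan sup_ge1)
    then show ?thesis using v VB noE by (intro indep_copy[of ?T]) (use n1 in \<open>auto simp: mem\<close>)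
  next
    case (VQ q)
    let ?T = "insert v (VI ` {..<n})"
    have "card ((VI ` {..<n}) :: 'a vtx set) = n" by (simp add: card_image inj_on_def)
    then have "n \<le> card ?T" by (metis card_mono finite_insert finite_imageI finite_lessThan subset_insertI)
    moreover have "\<forall>x\<in>?T. \<forall>y\<in>?T. \<not> E x y" using VQ noE unfolding E_def by (auto dest: Fin)
    ultimately show ?thesis using v VQ by (intro indep_copy[of ?T]) (use n1 in \<open>auto simp: mem\<close>)
  next
    case (VA j w)
    show ?thesis
    proof (cases "j = 0")
      case True
      let ?T = "insert v (VI ` {..<n})"
      have "card ((VI ` {..<n}) :: 'a vtx set) = n" by (simp add: card_image inj_on_def)
      then have "n \<le> card ?T" by (metis card_mono finite_insert finite_imageI finite_lessThan subset_insertI)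
      moreover have "\<forall>x\<in>?T. \<forall>y\<in>?T. \<not> E x y" using VA True noE unfolding E_def by (auto dest: Fin)
      ultimately show ?thesis using v VA by (intro indep_copy[of ?T]) (use n1 in \<open>auto simp: mem\<close>)
    next
      case False
      define X where "X = {i\<in>{..<n}. i div c + 1 \<noteq> j}"
      let ?T = "insert v (VI ` X \<union> VB ` {..<c})"
      have fX: "finite X" unfolding X_def by simp
      have "{..<n} \<subseteq> X \<union> {(j - 1) * c ..< (j - 1) * c + c}"
      proof
        fix i assume i: "i \<in> {..<n}"
        show "i \<in> X \<union> {(j - 1) * c ..< (j - 1) * c + c}"
        proof (cases "i div c + 1 = j")
          case True
          then have "i div c = j - 1" by simp
          moreover have "i div c * c + i mod c = i" by (rule div_mult_mod_eq)
          moreover have "i mod c < c" using c1 by simp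
          ultimately have "(j - 1) * c \<le> i" "i < (j - 1) * c + c" by auto
          then show ?thesis by simp
        qed (use i X_def in auto)
      qed
      then have "card {..<n} \<le> card (X \<union> {(j - 1) * c ..< (j - 1) * c + c})" by (intro card_mono) (auto simp: fX)
      also have "\<dots> \<le> card X + c" using card_Un_le[of X "{(j - 1) * c ..< (j - 1) * c + c}"] by simp
      finally have cX: "n \<le> card X + c" by simp
      have "card ((VI ` X \<union> VB ` {..<c}) :: 'a vtx set) = card X + c"
        by (subst card_Un_disjoint) (auto simp: fX card_image inj_on_def)
      then have "n \<le> card ?T" using cX by (metis card_mono finite_insert finite_imageI finite_lessThan subset_insertI finite_Un fX order_trans)
      moreover have "\<forall>x\<in>?T. \<forall>y\<in>?T. \<not> E x y" using VA noE \<open>j \<noteq> 0\<close> unfolding E_def X_def by (auto dest: Fin)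
      moreover have "?T \<subseteq> V" using v unfolding X_def by (auto simp: mem)
      ultimately show ?thesis using v fX by (intro indep_copy[of ?T]) (use n1 in \<open>auto\<close>)
    qed
  qed
  have fu: "full V E W F (fst (edgeless n)) (snd (edgeless n))" unfolding full_def using Hcop Icop by blast
  have "card V \<le> card (VI ` {..<n} \<union> (\<lambda>(j,w). VA j w) ` ({..p} \<times> N0) \<union> VQ ` Q0) + card (VB ` {..<c} :: 'a vtx set)"
    unfolding V_def by (rule card_Un_le)
  also have "\<dots> \<le> card (VI ` {..<n} \<union> (\<lambda>(j,w). VA j w) ` ({..p} \<times> N0)) + card (VQ ` Q0) + card (VB ` {..<c} :: 'a vtx set)"
    using card_Un_le by (meson add_le_mono1)
  also have "\<dots> \<le> card (VI ` {..<n} :: 'a vtx set) + card ((\<lambda>(j,w). VA j w) ` ({..p} \<times> N0)) + card (VQ ` Q0) + card (VB ` {..<c} :: 'a vtx set)"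
    using card_Un_le by (meson add_le_mono1)
  also have "\<dots> \<le> n + (p + 1) * card N0 + card W + c"
  proof -
    have "card (VI ` {..<n} :: 'a vtx set) \<le> n" using card_image_le[of "{..<n}" "VI :: nat \<Rightarrow> 'a vtx"] by simp
    moreover have "card ((\<lambda>(j,w). VA j w) ` ({..p} \<times> N0)) \<le> (p + 1) * card N0"
      using card_image_le[of "{..p} \<times> N0" "\<lambda>(j,w). VA j w"] fN0 by (simp add: card_cartesian_product)
    moreover have "card (VQ ` Q0) \<le> card W"
      using card_image_le[of Q0 VQ] fN0 card_mono[OF fW, of Q0] unfolding Q0_def by force
    moreover have "card (VB ` {..<c} :: 'a vtx set) \<le> c" using card_image_le[of "{..<c}" "VB :: nat \<Rightarrow> 'a vtx"] by simp
    ultimately show ?thesis by linarith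
  qed
  finally show ?thesis using gr fu by blast
qed




theorem corollary3p2:
  fixes W :: "'a set" and F :: "'a \<Rightarrow> 'a \<Rightarrow> bool"
  assumes "graph W F" and "W \<noteq> {}"
  shows "\<exists>C. \<forall>\<^sub>F n in sequentially.
           \<bar>real (f_full W F (fst (edgeless n)) (snd (edgeless n)))
             - (real n + 2 * sqrt (real (min_degree W F) * real n))\<bar> \<le> C"
proof -
  define \<delta> where "\<delta> = min_degree W F"
  have fW: "finite W" using assms unfolding graph_def by auto
  have "Min (degree W F ` W) \<in> degree W F ` W" using fW assms(2) by (intro Min_in) auto
  then obtain w0 where w0: "w0 \<in> W" "degree W F w0 = \<delta>" unfolding \<delta>_def min_degree_def by auto
  have cN0: "card {w\<in>W. F w0 w} = \<delta>" using w0 unfolding degree_def by simp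
  have bound: "\<bar>real (f_full W F (fst (edgeless n)) (snd (edgeless n)))
             - (real n + 2 * sqrt (real \<delta> * real n))\<bar> \<le> 2 * real \<delta> + real (card W) + 1"
    if n1: "1 \<le> n" for n
  proof -
    define c where "c = max 1 (nat \<lceil>sqrt (real \<delta> * real n)\<rceil>)"
    have c1: "1 \<le> c" unfolding c_def by simp
    define V where "V = VI ` {..<n} \<union> (\<lambda>(j,w). VA j w) ` ({..(n - 1) div c + 1} \<times> {w\<in>W. F w0 w})
        \<union> VQ ` (W - insert w0 {w\<in>W. F w0 w}) \<union> VB ` {..<c}"
    define E where "E = (\<lambda>u v. u \<in> V \<and> v \<in> V \<and> (adj0 F c u v \<or> adj0 F c v u))"
    have up: "graph V E \<and> full V E W F (fst (edgeless n)) (snd (edgeless n))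
       \<and> card V \<le> n + ((n - 1) div c + 1 + 1) * \<delta> + card W + c"
      using upper_graph[OF assms(1) w0(1) n1 c1] cN0 unfolding V_def E_def by simp
    have num: "real (((n - 1) div c + 1) * \<delta>) + real c \<le> 2 * sqrt (real \<delta> * real n) + real \<delta> + 1"
      using numeric[OF n1, of \<delta>] unfolding c_def by simp
    have "VI 0 \<in> V" using n1 unfolding V_def by auto
    moreover have "finite V" using up unfolding graph_def by auto
    ultimately have V1: "1 \<le> card V" by (metis One_nat_def Suc_leI card_gt_0_iff empty_iff)
    define P where "P = (\<lambda>m::nat. m \<ge> 1 \<and> (\<exists>E. graph {0..<m} E \<and> full {0..<m} E W F (fst (edgeless n)) (snd (edgeless n))))"
    have PV: "P (card V)" unfolding P_def using V1 transfer[of V E] up by blast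
    have fdef: "f_full W F (fst (edgeless n)) (snd (edgeless n)) = Least P" unfolding f_full_def P_def by simp
    define f where "f = Least P"
    have fle: "f \<le> card V" unfolding f_def using PV by (rule Least_le)
    have Pf: "P f" unfolding f_def using PV by (rule LeastI)
    then obtain E' where E': "graph {0..<f} E'" "full {0..<f} E' W F (fst (edgeless n)) (snd (edgeless n))" "1 \<le> f"
      unfolding P_def by blast
    have "{0..<f} \<noteq> {}" using E'(3) by auto
    then have lo: "real n + 2 * sqrt (real \<delta> * real n) - real \<delta> \<le> real (card {0..<f})"
      using lower[OF E'(1) E'(2) _ n1 assms] unfolding \<delta>_def by blast
    have cV: "card V \<le> n + ((n - 1) div c + 1) * \<delta> + \<delta> + card W + c"
      using up by (simp add: algebra_simps)
    have "real f \<le> real (card V)" using fle by simp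
    also have "\<dots> \<le> real (n + ((n - 1) div c + 1) * \<delta> + \<delta> + card W + c)"
      using cV by (simp only: of_nat_le_iff)
    also have "\<dots> = real n + real (((n - 1) div c + 1) * \<delta>) + real \<delta> + real (card W) + real c"
      by (simp only: of_nat_add)
    finally have hi: "real f \<le> real n + 2 * sqrt (real \<delta> * real n) + 2 * real \<delta> + real (card W) + 1"
      using num by linarith
    show ?thesis using lo hi unfolding fdef f_def[symmetric] by simp
  qed
  show ?thesis unfolding \<delta>_def[symmetric]
    by (rule exI[of _ "2 * real \<delta> + real (card W) + 1"], rule eventually_sequentiallyI[of 1]) (use bound in auto)
qed

end
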